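(* Let $(\Omega,\Sigma,\mu)$ be a measure space with $\mu$ a positive countably additive measure, let $\rho:\Omega\to[0,\infty)$ be measurable, and let $f,g_1,\dots,g_n,h$ be real-valued measurable functions on $\Omega$ with $\int_\Omega\rho|u|^2\,d\mu<\infty$ for each $u\in\{f,g_1,\dots,g_n,h\}$. Writing $\int_\Omega\rho uv\,d\mu$ for $\int_\Omega\rho(s)u(s)v(s)\,d\mu(s)$, we have \[ \sum_{i=1}^n\begin{vmatrix}\int_\Omega\rho fg_i\,d\mu & \int_\Omega\rho fh\,d\mu\\ \int_\Omega\rho g_ih\,d\mu & \int_\Omega\rho h^2\,d\mu\end{vmatrix}^2 \le \begin{vmatrix}\int_\Omega\rho f^2\,d\mu & \int_\Omega\rho fh\,d\mu\\ \int_\Omega\rho fh\,d\mu & \int_\Omega\rho h^2\,d\mu\end{vmatrix} \times\left\{\max_{1\le i\le n}\begin{vmatrix}\int_\Omega\rho g_i^2\,d\mu & \int_\Omega\rho g_ih\,d\mu\\ \int_\Omega\rho g_ih\,d\mu & \int_\Omega\rho h^2\,d\mu\end{vmatrix} +(n-1)\max_{1\le i\ne j\le n}\left|\begin{vmatrix}\int_\Omega\rho g_jg_i\,d\mu & \int_\Omega\rho g_jh\,d\mu\\ \int_\Omega\rho g_ih\,d\mu & \int_\Omega\rho h^2\,d\mu\end{vmatrix}\right|\right\}. \]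
   Context: $\begin{vmatrix}a&b\\c&d\end{vmatrix}=ad-bc$ denotes a $2\times2$ determinant. The maximum over $1\le i\ne j\le n$ is over all pairs $(i,j)$ with $i\ne j$. *)

theory Defs
  imports "HOL-Analysis.Analysis"
begin

definition det2 :: "real \<Rightarrow> real \<Rightarrow> real \<Rightarrow> real \<Rightarrow> real" where
  "det2 a b c d = a * d - b * c"

definition wip :: "'a measure \<Rightarrow> ('a \<Rightarrow> real) \<Rightarrow> ('a \<Rightarrow> real) \<Rightarrow> ('a \<Rightarrow> real) \<Rightarrow> real" where
  "wip M \<rho> u v = (LINT s|M. \<rho> s * u s * v s)"

end

theory Submission
  imports Defs
begin

lemma amgm_b: fixes x y b :: real shows "x*y*b \<le> (x\<^sup>2+y\<^sup>2)/2*\<bar>b\<bar>"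
proof -
  have "2*\<bar>x*y\<bar> \<le> x\<^sup>2+y\<^sup>2"
    using sum_squares_bound[of "\<bar>x\<bar>" "\<bar>y\<bar>"] by (simp add: abs_mult)
  hence "\<bar>x*y\<bar>*\<bar>b\<bar> \<le> (x\<^sup>2+y\<^sup>2)/2*\<bar>b\<bar>" by (intro mult_right_mono) auto
  moreover have "x*y*b \<le> \<bar>x*y\<bar>*\<bar>b\<bar>" by (metis abs_ge_self abs_mult)
  ultimately show ?thesis by linarith
qed

lemma quad: fixes a b c :: real assumes "\<And>t. 0 \<le> a - 2*t*b + t\<^sup>2*c" and c0: "c \<ge> 0" shows "b\<^sup>2 \<le> a*c"
proof (cases "c = 0")
  case True
  show ?thesis
  proof (rule ccontr)
    assume "\<not> ?thesis"
    hence "b \<noteq> 0" using True by auto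
    have "0 \<le> a - 2*((a+1)/(2*b))*b" using assms(1)[of "(a+1)/(2*b)"] True by simp
    also have "\<dots> = -1" using \<open>b\<noteq>0\<close> by (simp add: field_simps)
    finally show False by simp
  qed
next
  case False
  with c0 have "c > 0" by simp
  have "0 \<le> a - 2*(b/c)*b + (b/c)\<^sup>2*c" using assms by blast
  also have "\<dots> = (a*c - b\<^sup>2)/c" using \<open>c>0\<close> by (simp add: field_simps power2_eq_square)
  finally show ?thesis using \<open>c>0\<close> by (simp add: zero_le_divide_iff)
qed

definition inL :: "'a measure \<Rightarrow> ('a \<Rightarrow> real) \<Rightarrow> ('a \<Rightarrow> real) \<Rightarrow> bool" where
  "inL M \<rho> u \<longleftrightarrow> u \<in> borel_measurable M \<and> integrable M (\<lambda>s. \<rho> s * (u s)\<^sup>2)"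

lemma inL_prod:
  assumes rm: "\<rho> \<in> borel_measurable M" and rn: "\<And>s. s \<in> space M \<Longrightarrow> \<rho> s \<ge> 0"
    and u: "inL M \<rho> u" and v: "inL M \<rho> v"
  shows "integrable M (\<lambda>s. \<rho> s * u s * v s)"
proof (rule Bochner_Integration.integrable_bound)
  show "integrable M (\<lambda>s. \<rho> s * (u s)\<^sup>2 + \<rho> s * (v s)\<^sup>2)"
    using u v unfolding inL_def by auto
  show "(\<lambda>s. \<rho> s * u s * v s) \<in> borel_measurable M" using u v rm unfolding inL_def by auto
  show "AE x in M. norm (\<rho> x * u x * v x) \<le> norm (\<rho> x * (u x)\<^sup>2 + \<rho> x * (v x)\<^sup>2)"
  proof (rule AE_I2)
    fix x assume x: "x \<in> space M"
    have "2 * \<bar>u x * v x\<bar> \<le> (u x)\<^sup>2 + (v x)\<^sup>2"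
      using sum_squares_bound[of "\<bar>u x\<bar>" "\<bar>v x\<bar>"] by (simp add: abs_mult)
    moreover have "0 \<le> \<bar>u x * v x\<bar>" by simp
    ultimately have "\<bar>u x * v x\<bar> \<le> (u x)\<^sup>2 + (v x)\<^sup>2" by linarith
    hence "\<rho> x * \<bar>u x * v x\<bar> \<le> \<rho> x * ((u x)\<^sup>2 + (v x)\<^sup>2)" using rn[OF x] by (rule mult_left_mono)
    moreover have "0 \<le> \<rho> x * ((u x)\<^sup>2 + (v x)\<^sup>2)" using rn[OF x] by simp
    ultimately show "norm (\<rho> x * u x * v x) \<le> norm (\<rho> x * (u x)\<^sup>2 + \<rho> x * (v x)\<^sup>2)"
      using rn[OF x] by (simp add: abs_mult distrib_left mult.assoc)
  qed
qed

lemma inL_lin: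
  assumes rm: "\<rho> \<in> borel_measurable M" and rn: "\<And>s. s \<in> space M \<Longrightarrow> \<rho> s \<ge> 0"
    and u: "inL M \<rho> u" and v: "inL M \<rho> v"
  shows "inL M \<rho> (\<lambda>s. u s - t * v s)"
proof -
  have i: "integrable M (\<lambda>s. \<rho> s * u s * v s)" using inL_prod[OF rm rn u v] .
  have "integrable M (\<lambda>s. \<rho> s * (u s)\<^sup>2 - (2*t) * (\<rho> s * u s * v s) + t\<^sup>2 * (\<rho> s * (v s)\<^sup>2))"
    using u v i unfolding inL_def by auto
  moreover have "(\<lambda>s. \<rho> s * (u s)\<^sup>2 - (2*t) * (\<rho> s * u s * v s) + t\<^sup>2 * (\<rho> s * (v s)\<^sup>2))
     = (\<lambda>s. \<rho> s * (u s - t * v s)\<^sup>2)" by (auto simp: power2_eq_square algebra_simps)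
  ultimately show ?thesis using u v unfolding inL_def by auto
qed

lemma inL_sum:
  assumes rm: "\<rho> \<in> borel_measurable M" and rn: "\<And>s. s \<in> space M \<Longrightarrow> \<rho> s \<ge> 0"
    and fin: "finite I" and g: "\<And>i. i \<in> I \<Longrightarrow> inL M \<rho> (g i)"
  shows "inL M \<rho> (\<lambda>s. \<Sum>i\<in>I. c i * g i s)"
  using fin g
proof (induction I rule: finite_induct)
  case empty
  then show ?case by (simp add: inL_def)
next
  case (insert x F)
  have "inL M \<rho> (\<lambda>s. (\<Sum>i\<in>F. c i * g i s) - (- c x) * g x s)"
    using insert by (intro inL_lin[OF rm rn]) auto
  moreover have "(\<lambda>s. (\<Sum>i\<in>F. c i * g i s) - (- c x) * g x s) = (\<lambda>s. \<Sum>i\<in>insert x F. c i * g i s)"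
    using insert by auto
  ultimately show ?case by simp
qed

lemma wip_sym: "wip M \<rho> u v = wip M \<rho> v u"
  unfolding wip_def by (simp add: mult_ac)

lemma wip_nonneg: assumes "\<And>s. s \<in> space M \<Longrightarrow> \<rho> s \<ge> 0" shows "wip M \<rho> u u \<ge> 0"
  unfolding wip_def using assms by (intro integral_nonneg_AE AE_I2) (simp add: mult.assoc)

lemma wip_lin1:
  assumes rm: "\<rho> \<in> borel_measurable M" and rn: "\<And>s. s \<in> space M \<Longrightarrow> \<rho> s \<ge> 0"
    and u: "inL M \<rho> u" and v: "inL M \<rho> v" and w: "inL M \<rho> w"
  shows "wip M \<rho> (\<lambda>s. u s - t * v s) w = wip M \<rho> u w - t * wip M \<rho> v w"
proof -
  have 1: "integrable M (\<lambda>s. \<rho> s * u s * w s)" using inL_prod[OF rm rn u w] .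
  have 2: "integrable M (\<lambda>s. t * (\<rho> s * v s * w s))" using inL_prod[OF rm rn v w] by simp
  have "(\<lambda>s. \<rho> s * (u s - t * v s) * w s) = (\<lambda>s. \<rho> s * u s * w s - t * (\<rho> s * v s * w s))"
    by (auto simp: algebra_simps)
  thus ?thesis unfolding wip_def using 1 2 by simp
qed

lemma wip_sum2:
  assumes rm: "\<rho> \<in> borel_measurable M" and rn: "\<And>s. s \<in> space M \<Longrightarrow> \<rho> s \<ge> 0"
    and u: "inL M \<rho> u" and g: "\<And>i. i \<in> I \<Longrightarrow> inL M \<rho> (g i)"
  shows "wip M \<rho> u (\<lambda>s. \<Sum>i\<in>I. c i * g i s) = (\<Sum>i\<in>I. c i * wip M \<rho> u (g i))"
proof -
  have "(\<lambda>s. \<rho> s * u s * (\<Sum>i\<in>I. c i * g i s)) = (\<lambda>s. \<Sum>i\<in>I. c i * (\<rho> s * u s * g i s))"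
    by (auto simp: sum_distrib_left mult_ac)
  moreover have "\<And>i. i \<in> I \<Longrightarrow> integrable M (\<lambda>s. c i * (\<rho> s * u s * g i s))"
    using inL_prod[OF rm rn u g] by simp
  ultimately show ?thesis unfolding wip_def by (simp add: integral_sum)
qed

lemma wip_CS:
  assumes rm: "\<rho> \<in> borel_measurable M" and rn: "\<And>s. s \<in> space M \<Longrightarrow> \<rho> s \<ge> 0"
    and u: "inL M \<rho> u" and v: "inL M \<rho> v"
  shows "(wip M \<rho> u v)\<^sup>2 \<le> wip M \<rho> u u * wip M \<rho> v v"
proof (rule quad)
  fix t
  let ?x = "\<lambda>s. u s - t * v s"
  have x: "inL M \<rho> ?x" by (rule inL_lin[OF rm rn u v])
  have "wip M \<rho> ?x ?x = wip M \<rho> u ?x - t * wip M \<rho> v ?x" by (rule wip_lin1[OF rm rn u v x])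
  also have "\<dots> = wip M \<rho> ?x u - t * wip M \<rho> ?x v" by (simp add: wip_sym)
  also have "\<dots> = (wip M \<rho> u u - t * wip M \<rho> v u) - t * (wip M \<rho> u v - t * wip M \<rho> v v)"
    using wip_lin1[OF rm rn u v u] wip_lin1[OF rm rn u v v] by simp
  also have "\<dots> = wip M \<rho> u u - 2 * t * wip M \<rho> u v + t\<^sup>2 * wip M \<rho> v v"
    by (simp add: wip_sym[of M \<rho> v u] power2_eq_square algebra_simps)
  finally show "0 \<le> wip M \<rho> u u - 2 * t * wip M \<rho> u v + t\<^sup>2 * wip M \<rho> v v"
    using wip_nonneg[of M \<rho> ?x] rn by simp
  show "0 \<le> wip M \<rho> v v" using wip_nonneg rn by blast
qed

theorem proposition5p2:
  fixes M :: "'a measure" and \<rho> f h :: "'a \<Rightarrow> real" and g :: "nat \<Rightarrow> 'a \<Rightarrow> real"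
    and n :: nat
  assumes n: "n \<ge> 1"
    and rho_meas: "\<rho> \<in> borel_measurable M" and rho_nonneg: "\<And>s. s \<in> space M \<Longrightarrow> \<rho> s \<ge> 0"
    and f_meas: "f \<in> borel_measurable M" and h_meas: "h \<in> borel_measurable M"
    and g_meas: "\<And>i. i \<in> {1..n} \<Longrightarrow> g i \<in> borel_measurable M"
    and f_L2: "integrable M (\<lambda>s. \<rho> s * \<bar>f s\<bar>^2)"
    and h_L2: "integrable M (\<lambda>s. \<rho> s * \<bar>h s\<bar>^2)"
    and g_L2: "\<And>i. i \<in> {1..n} \<Longrightarrow> integrable M (\<lambda>s. \<rho> s * \<bar>g i s\<bar>^2)"
  shows "(\<Sum>i=1..n. (det2 (wip M \<rho> f (g i)) (wip M \<rho> f h) (wip M \<rho> (g i) h) (wip M \<rho> h h))^2)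
    \<le> det2 (wip M \<rho> f f) (wip M \<rho> f h) (wip M \<rho> f h) (wip M \<rho> h h) *
       (Max {det2 (wip M \<rho> (g i) (g i)) (wip M \<rho> (g i) h) (wip M \<rho> (g i) h) (wip M \<rho> h h) | i. i \<in> {1..n}}
        + (real n - 1) *
          (if n \<ge> 2 then
             Max {\<bar>det2 (wip M \<rho> (g j) (g i)) (wip M \<rho> (g j) h) (wip M \<rho> (g i) h) (wip M \<rho> h h)\<bar>
                  | i j. i \<in> {1..n} \<and> j \<in> {1..n} \<and> i \<noteq> j}
           else 0))"
proof -
  note rm = rho_meas and rn = rho_nonneg
  define H where "H = wip M \<rho> h h"
  define Bf where "Bf u v = wip M \<rho> u v * H - wip M \<rho> u h * wip M \<rho> v h" for u v
  have fL: "inL M \<rho> f" using f_meas f_L2 by (simp add: inL_def power2_abs)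
  have hL: "inL M \<rho> h" using h_meas h_L2 by (simp add: inL_def power2_abs)
  have gL: "inL M \<rho> (g i)" if "i \<in> {1..n}" for i using g_meas[OF that] g_L2[OF that] by (simp add: inL_def power2_abs)
  have Bsym: "Bf u v = Bf v u" for u v unfolding Bf_def by (simp add: wip_sym[of M \<rho> u v])
  have Bnn: "Bf w w \<ge> 0" if "inL M \<rho> w" for w
    using wip_CS[OF rm rn that hL] unfolding Bf_def H_def by (simp add: power2_eq_square)
  have Blin: "Bf (\<lambda>s. u s - t * v s) w = Bf u w - t * Bf v w"
    if "inL M \<rho> u" "inL M \<rho> v" "inL M \<rho> w" for u v w t
  proof -
    have e1: "wip M \<rho> (\<lambda>s. u s - t * v s) w = wip M \<rho> u w - t * wip M \<rho> v w"
      by (rule wip_lin1[OF rm rn that])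
    have e2: "wip M \<rho> (\<lambda>s. u s - t * v s) h = wip M \<rho> u h - t * wip M \<rho> v h"
      by (rule wip_lin1[OF rm rn that(1,2) hL])
    show ?thesis unfolding Bf_def e1 e2 by (simp add: algebra_simps)
  qed
  have Bsum: "Bf u (\<lambda>s. \<Sum>i\<in>{1..n}. c i * g i s) = (\<Sum>i\<in>{1..n}. c i * Bf u (g i))"
    if "inL M \<rho> u" for u and c :: "nat \<Rightarrow> real"
  proof -
    have a: "wip M \<rho> u (\<lambda>s. \<Sum>i\<in>{1..n}. c i * g i s) = (\<Sum>i\<in>{1..n}. c i * wip M \<rho> u (g i))"
      by (rule wip_sum2[OF rm rn that gL])
    have b: "wip M \<rho> (\<lambda>s. \<Sum>i\<in>{1..n}. c i * g i s) h = (\<Sum>i\<in>{1..n}. c i * wip M \<rho> (g i) h)"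
    proof -
      have b0: "wip M \<rho> h (\<lambda>s. \<Sum>i\<in>{1..n}. c i * g i s) = (\<Sum>i\<in>{1..n}. c i * wip M \<rho> h (g i))"
        by (rule wip_sum2[OF rm rn hL gL])
      then show ?thesis by (simp only: wip_sym[of M \<rho> h])
    qed
    show ?thesis unfolding Bf_def a b
      by (simp add: sum_distrib_left sum_distrib_right sum_subtractf algebra_simps)
  qed
  have BCS: "(Bf u v)\<^sup>2 \<le> Bf u u * Bf v v" if u: "inL M \<rho> u" and v: "inL M \<rho> v" for u v
  proof (rule quad)
    fix t
    let ?x = "\<lambda>s. u s - t * v s"
    have x: "inL M \<rho> ?x" by (rule inL_lin[OF rm rn u v])
    have "Bf ?x ?x = Bf u ?x - t * Bf v ?x" by (rule Blin[OF u v x])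
    also have "\<dots> = Bf ?x u - t * Bf ?x v" by (simp add: Bsym)
    also have "\<dots> = (Bf u u - t * Bf v u) - t * (Bf u v - t * Bf v v)"
      using Blin[OF u v u] Blin[OF u v v] by simp
    also have "\<dots> = Bf u u - 2 * t * Bf u v + t\<^sup>2 * Bf v v"
      by (simp add: Bsym[of v u] power2_eq_square algebra_simps)
    finally show "0 \<le> Bf u u - 2 * t * Bf u v + t\<^sup>2 * Bf v v"
      using Bnn[OF x] by simp
    show "0 \<le> Bf v v" using Bnn[OF v] .
  qed
  define c where "c i = Bf f (g i)" for i
  define v where "v = (\<lambda>s. \<Sum>i\<in>{1..n}. c i * g i s)"
  define S where "S = (\<Sum>i\<in>{1..n}. (c i)\<^sup>2)"
  define G where "G i j = Bf (g i) (g j)" for i j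
  define M1 where "M1 = Max {det2 (wip M \<rho> (g i) (g i)) (wip M \<rho> (g i) h) (wip M \<rho> (g i) h) (wip M \<rho> h h) | i. i \<in> {1..n}}"
  define M2 where "M2 = (if n \<ge> 2 then
             Max {\<bar>det2 (wip M \<rho> (g j) (g i)) (wip M \<rho> (g j) h) (wip M \<rho> (g i) h) (wip M \<rho> h h)\<bar>
                  | i j. i \<in> {1..n} \<and> j \<in> {1..n} \<and> i \<noteq> j}
           else 0)"
  define K where "K = M1 + (real n - 1) * M2"
  have vL: "inL M \<rho> v" unfolding v_def by (rule inL_sum[OF rm rn _ gL]) auto
  have M1ge: "G i i \<le> M1" if "i \<in> {1..n}" for i
  proof -
    have fin: "finite {det2 (wip M \<rho> (g i) (g i)) (wip M \<rho> (g i) h) (wip M \<rho> (g i) h) (wip M \<rho> h h) | i. i \<in> {1..n}}"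
      by (rule finite_image_set) simp
    have "det2 (wip M \<rho> (g i) (g i)) (wip M \<rho> (g i) h) (wip M \<rho> (g i) h) (wip M \<rho> h h) \<le> M1"
      unfolding M1_def by (rule Max_ge[OF fin]) (use that in blast)
    thus ?thesis by (simp add: G_def Bf_def H_def det2_def)
  qed
  have M2ge: "\<bar>G i j\<bar> \<le> M2" if "i \<in> {1..n}" "j \<in> {1..n}" "i \<noteq> j" for i j
  proof -
    have n2: "n \<ge> 2" using that by auto
    let ?F = "\<lambda>i j. \<bar>det2 (wip M \<rho> (g j) (g i)) (wip M \<rho> (g j) h) (wip M \<rho> (g i) h) (wip M \<rho> h h)\<bar>"
    have sub: "{?F i j | i j. i \<in> {1..n} \<and> j \<in> {1..n} \<and> i \<noteq> j} \<subseteq> (\<lambda>(i,j). ?F i j) ` ({1..n} \<times> {1..n})"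
      by auto
    have fin: "finite {?F i j | i j. i \<in> {1..n} \<and> j \<in> {1..n} \<and> i \<noteq> j}"
      by (rule finite_subset[OF sub]) simp
    have "?F j i \<le> Max {?F i j | i j. i \<in> {1..n} \<and> j \<in> {1..n} \<and> i \<noteq> j}"
      by (rule Max_ge[OF fin]) (use that in blast)
    thus ?thesis unfolding M2_def G_def Bf_def H_def det2_def using n2 by simp
  qed
  have M2nn: "M2 \<ge> 0"
  proof (cases "n \<ge> 2")
    case True
    hence "\<bar>G 1 2\<bar> \<le> M2" by (intro M2ge) auto
    thus ?thesis by linarith
  qed (simp add: M2_def)
  have Gii: "G i i \<ge> 0" if "i \<in> {1..n}" for i unfolding G_def using Bnn[OF gL[OF that]] .
  have row: "(\<Sum>j\<in>{1..n}. \<bar>G i j\<bar>) \<le> K" if i: "i \<in> {1..n}" for i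
  proof -
    have "(\<Sum>j\<in>{1..n}. \<bar>G i j\<bar>) = \<bar>G i i\<bar> + (\<Sum>j\<in>{1..n}-{i}. \<bar>G i j\<bar>)"
      using i by (simp add: sum.remove)
    also have "(\<Sum>j\<in>{1..n}-{i}. \<bar>G i j\<bar>) \<le> of_nat (card ({1..n}-{i})) * M2"
      by (rule sum_bounded_above) (use M2ge i in auto)
    also have "card ({1..n}-{i}) = n - 1" using i by simp
    also have "real (n - 1) = real n - 1" using n by simp
    finally show ?thesis unfolding K_def using M1ge[OF i] Gii[OF i] by simp
  qed
  have S_eq: "S = Bf f v" unfolding v_def Bsum[OF fL] S_def c_def by (simp add: power2_eq_square)
  have Bvv: "Bf v v = (\<Sum>i\<in>{1..n}. \<Sum>j\<in>{1..n}. c i * c j * G i j)"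
  proof -
    have "Bf v v = (\<Sum>i\<in>{1..n}. c i * Bf v (g i))" unfolding v_def[symmetric] using Bsum[OF vL, of c]
      by (simp add: v_def)
    also have "\<dots> = (\<Sum>i\<in>{1..n}. c i * Bf (g i) v)" by (simp add: Bsym)
    also have "\<dots> = (\<Sum>i\<in>{1..n}. c i * (\<Sum>j\<in>{1..n}. c j * G i j))"
    proof (intro sum.cong refl)
      fix i assume i: "i \<in> {1..n}"
      show "c i * Bf (g i) v = c i * (\<Sum>j\<in>{1..n}. c j * G i j)"
        unfolding v_def Bsum[OF gL[OF i]] G_def ..
    qed
    finally show ?thesis by (simp add: sum_distrib_left mult_ac)
  qed
  have "Bf v v \<le> (\<Sum>i\<in>{1..n}. \<Sum>j\<in>{1..n}. ((c i)\<^sup>2 + (c j)\<^sup>2)/2 * \<bar>G i j\<bar>)"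
    unfolding Bvv by (intro sum_mono amgm_b)
  also have "\<dots> = (\<Sum>i\<in>{1..n}. \<Sum>j\<in>{1..n}. (c i)\<^sup>2/2 * \<bar>G i j\<bar>) + (\<Sum>i\<in>{1..n}. \<Sum>j\<in>{1..n}. (c j)\<^sup>2/2 * \<bar>G i j\<bar>)"
    by (simp add: add_divide_distrib distrib_right sum.distrib)
  also have "(\<Sum>i\<in>{1..n}. \<Sum>j\<in>{1..n}. (c j)\<^sup>2/2 * \<bar>G i j\<bar>) = (\<Sum>j\<in>{1..n}. \<Sum>i\<in>{1..n}. (c j)\<^sup>2/2 * \<bar>G j i\<bar>)"
    by (subst sum.swap) (simp add: G_def Bsym)
  also have "(\<Sum>i\<in>{1..n}. \<Sum>j\<in>{1..n}. (c i)\<^sup>2/2 * \<bar>G i j\<bar>) + (\<Sum>j\<in>{1..n}. \<Sum>i\<in>{1..n}. (c j)\<^sup>2/2 * \<bar>G j i\<bar>)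
      = (\<Sum>i\<in>{1..n}. (c i)\<^sup>2 * (\<Sum>j\<in>{1..n}. \<bar>G i j\<bar>))"
    by (simp add: sum_distrib_left sum.distrib[symmetric] mult.commute)
  also have "\<dots> \<le> (\<Sum>i\<in>{1..n}. (c i)\<^sup>2 * K)"
    by (intro sum_mono mult_left_mono row) auto
  also have "\<dots> = S * K" by (simp add: S_def sum_distrib_right)
  finally have BvvK: "Bf v v \<le> S * K" .
  have Bff: "Bf f f \<ge> 0" by (rule Bnn[OF fL])
  have S0: "S \<ge> 0" unfolding S_def by (simp add: sum_nonneg)
  have K0: "K \<ge> 0" unfolding K_def using M1ge[of 1] Gii[of 1] n M2nn by simp
  have main: "S \<le> Bf f f * K"
  proof (cases "S = 0")
    case True thus ?thesis using Bff K0 by simp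
  next
    case False
    hence Sp: "S > 0" using S0 by simp
    have "S * S \<le> Bf f f * Bf v v" using BCS[OF fL vL] S_eq by (simp add: power2_eq_square)
    also have "\<dots> \<le> Bf f f * (S * K)" using BvvK Bff by (rule mult_left_mono)
    finally have "S * S \<le> (Bf f f * K) * S" by (simp add: mult_ac)
    thus ?thesis using Sp by simp
  qed
  show ?thesis using main unfolding S_def c_def K_def M1_def[symmetric] M2_def[symmetric]
    by (simp add: Bf_def H_def det2_def)
qed

end
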